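(* Let $F:\mathbf{C}\rightleftarrows\mathbf{D}:G$ be an adjunction ($F$ left adjoint to $G$). (a) If $\mathbf{D}$ has the Ramsey property for morphisms, then so does $\mathbf{C}$. (b) If $\mathbf{C}$ has the dual Ramsey property for morphisms, then so does $\mathbf{D}$.
   Context: For objects $\mathcal{A},\mathcal{B}$ of a category, $\hom(\mathcal{A},\mathcal{B})$ is the set of morphisms $\mathcal{A}\to\mathcal{B}$; write $\mathcal{A}\to\mathcal{B}$ if it is nonempty. A $k$-coloring of a set $S$ is a decomposition $S=\mathcal{M}_1\cup\dots\cup\mathcal{M}_k$ into pairwise disjoint sets. For $k\ge2$, $\mathcal{C}\overset{hom}{\longrightarrow}(\mathcal{B})^{\mathcal{A}}_k$ means $\mathcal{A}\to\mathcal{B}\to\mathcal{C}$ and for every $k$-coloring of $\hom(\mathcal{A},\mathcal{C})$ there are $i$ and a morphism $w:\mathcal{B}\to\mathcal{C}$ with $w\cdot\hom(\mathcal{A},\mathcal{B})\subseteq\mathcal{M}_i$. A category has the Ramsey property for morphisms if for every $k\ge2$ and all objects $\mathcal{A},\mathcal{B}$ with $\mathcal{A}\to\mathcal{B}$ there is an object $\mathcal{C}$ with $\mathcal{C}\overset{hom}{\longrightarrow}(\mathcal{B})^{\mathcal{A}}_k$. A category $\mathbf{C}$ has the dual Ramsey property for morphisms if its opposite category $\mathbf{C}^{\mathrm{op}}$ has the Ramsey property for morphisms. *)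

theory Defs
  imports Main
begin

text \<open>Composition convention: cmp C g f is "g after f" (written g \<cdot> f in the paper).\<close>

record ('o, 'm) category =
  Obj :: "'o set"
  Mor :: "'m set"
  Dom :: "'m \<Rightarrow> 'o"
  Cod :: "'m \<Rightarrow> 'o"
  cmp :: "'m \<Rightarrow> 'm \<Rightarrow> 'm"
  idt :: "'o \<Rightarrow> 'm"

definition hom :: "('o, 'm) category \<Rightarrow> 'o \<Rightarrow> 'o \<Rightarrow> 'm set" where
  "hom C a b = {f \<in> Mor C. Dom C f = a \<and> Cod C f = b}"

definition is_category :: "('o, 'm) category \<Rightarrow> bool" where
  "is_category C \<longleftrightarrow>
     (\<forall>f \<in> Mor C. Dom C f \<in> Obj C \<and> Cod C f \<in> Obj C) \<and>
     (\<forall>a \<in> Obj C. idt C a \<in> hom C a a) \<and>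
     (\<forall>a \<in> Obj C. \<forall>b \<in> Obj C. \<forall>c \<in> Obj C. \<forall>f \<in> hom C a b. \<forall>g \<in> hom C b c.
        cmp C g f \<in> hom C a c) \<and>
     (\<forall>a \<in> Obj C. \<forall>b \<in> Obj C. \<forall>c \<in> Obj C. \<forall>d \<in> Obj C.
        \<forall>f \<in> hom C a b. \<forall>g \<in> hom C b c. \<forall>h \<in> hom C c d.
        cmp C h (cmp C g f) = cmp C (cmp C h g) f) \<and>
     (\<forall>a \<in> Obj C. \<forall>b \<in> Obj C. \<forall>f \<in> hom C a b.
        cmp C f (idt C a) = f \<and> cmp C (idt C b) f = f)"

definition opposite :: "('o, 'm) category \<Rightarrow> ('o, 'm) category" where
  "opposite C = \<lparr>Obj = Obj C, Mor = Mor C, Dom = Cod C, Cod = Dom C,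
                 cmp = (\<lambda>g f. cmp C f g), idt = idt C\<rparr>"

definition is_functor ::
  "('o1, 'm1) category \<Rightarrow> ('o2, 'm2) category \<Rightarrow> ('o1 \<Rightarrow> 'o2) \<Rightarrow> ('m1 \<Rightarrow> 'm2) \<Rightarrow> bool" where
  "is_functor C D Fo Fm \<longleftrightarrow>
     (\<forall>a \<in> Obj C. Fo a \<in> Obj D) \<and>
     (\<forall>a \<in> Obj C. \<forall>b \<in> Obj C. \<forall>f \<in> hom C a b. Fm f \<in> hom D (Fo a) (Fo b)) \<and>
     (\<forall>a \<in> Obj C. Fm (idt C a) = idt D (Fo a)) \<and>
     (\<forall>a \<in> Obj C. \<forall>b \<in> Obj C. \<forall>c \<in> Obj C. \<forall>f \<in> hom C a b. \<forall>g \<in> hom C b c.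
        Fm (cmp C g f) = cmp D (Fm g) (Fm f))"

definition is_adjunction ::
  "('oc, 'mc) category \<Rightarrow> ('od, 'md) category \<Rightarrow>
   ('oc \<Rightarrow> 'od) \<Rightarrow> ('mc \<Rightarrow> 'md) \<Rightarrow> ('od \<Rightarrow> 'oc) \<Rightarrow> ('md \<Rightarrow> 'mc) \<Rightarrow>
   ('oc \<Rightarrow> 'od \<Rightarrow> 'md \<Rightarrow> 'mc) \<Rightarrow> bool" where
  "is_adjunction C D Fo Fm Go Gm \<phi> \<longleftrightarrow>
     is_category C \<and> is_category D \<and> is_functor C D Fo Fm \<and> is_functor D C Go Gm \<and>
     (\<forall>A \<in> Obj C. \<forall>B \<in> Obj D. bij_betw (\<phi> A B) (hom D (Fo A) B) (hom C A (Go B))) \<and>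
     (\<forall>A \<in> Obj C. \<forall>A' \<in> Obj C. \<forall>B \<in> Obj D. \<forall>u \<in> hom C A' A. \<forall>f \<in> hom D (Fo A) B.
        \<phi> A' B (cmp D f (Fm u)) = cmp C (\<phi> A B f) u) \<and>
     (\<forall>A \<in> Obj C. \<forall>B \<in> Obj D. \<forall>B' \<in> Obj D. \<forall>g \<in> hom D B B'. \<forall>f \<in> hom D (Fo A) B.
        \<phi> A B' (cmp D g f) = cmp C (Gm g) (\<phi> A B f))"

definition arrows :: "('o, 'm) category \<Rightarrow> 'o \<Rightarrow> 'o \<Rightarrow> bool" where
  "arrows C a b \<longleftrightarrow> hom C a b \<noteq> {}"

definition is_coloring :: "nat \<Rightarrow> 'a set \<Rightarrow> (nat \<Rightarrow> 'a set) \<Rightarrow> bool" where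
  "is_coloring k S M \<longleftrightarrow>
     (\<Union>i \<in> {1..k}. M i) = S \<and>
     (\<forall>i \<in> {1..k}. \<forall>j \<in> {1..k}. i \<noteq> j \<longrightarrow> M i \<inter> M j = {})"

text \<open>C \<longrightarrow>hom (B)^A_k\<close>

definition ramsey_arrow :: "('o, 'm) category \<Rightarrow> nat \<Rightarrow> 'o \<Rightarrow> 'o \<Rightarrow> 'o \<Rightarrow> bool" where
  "ramsey_arrow Cat k A B C \<longleftrightarrow>
     arrows Cat A B \<and> arrows Cat B C \<and>
     (\<forall>M. is_coloring k (hom Cat A C) M \<longrightarrow>
        (\<exists>i \<in> {1..k}. \<exists>w \<in> hom Cat B C. (\<lambda>f. cmp Cat w f) ` hom Cat A B \<subseteq> M i))"

definition ramsey_property_morphisms :: "('o, 'm) category \<Rightarrow> bool" where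
  "ramsey_property_morphisms Cat \<longleftrightarrow>
     (\<forall>k \<ge> 2. \<forall>A \<in> Obj Cat. \<forall>B \<in> Obj Cat. arrows Cat A B \<longrightarrow>
        (\<exists>C \<in> Obj Cat. ramsey_arrow Cat k A B C))"

definition dual_ramsey_property_morphisms :: "('o, 'm) category \<Rightarrow> bool" where
  "dual_ramsey_property_morphisms Cat \<longleftrightarrow> ramsey_property_morphisms (opposite Cat)"

end

theory Submission
  imports Defs
begin

lemma hom_opp[simp]: "hom (opposite C) a b = hom C b a"
  by (auto simp: hom_def opposite_def)

lemma ramsey_opp: "ramsey_property_morphisms (opposite C) \<longleftrightarrow>
  (\<forall>k \<ge> 2. \<forall>A \<in> Obj C. \<forall>B \<in> Obj C. hom C B A \<noteq> {} \<longrightarrow>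
     (\<exists>X \<in> Obj C. hom C B A \<noteq> {} \<and> hom C X B \<noteq> {} \<and>
       (\<forall>M. is_coloring k (hom C X A) M \<longrightarrow>
         (\<exists>i \<in> {1..k}. \<exists>w \<in> hom C X B. (\<lambda>f. cmp C f w) ` hom C B A \<subseteq> M i))))"
proof -
  have o: "Obj (opposite C) = Obj C" "\<And>g. cmp (opposite C) g = (\<lambda>f. cmp C f g)"
    by (simp_all add: opposite_def)
  show ?thesis unfolding ramsey_property_morphisms_def ramsey_arrow_def arrows_def
    by (simp only: o hom_opp)
qed

lemma partA:
  assumes adj: "is_adjunction C D Fo Fm Go Gm \<phi>" and R: "ramsey_property_morphisms D"
  shows "ramsey_property_morphisms C"
  unfolding ramsey_property_morphisms_def
proof (intro allI impI ballI)
  fix k :: nat and A B assume k: "k \<ge> 2" and A: "A \<in> Obj C" and B: "B \<in> Obj C"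
    and AB: "arrows C A B"
  from adj have cC: "is_category C" and cD: "is_category D" and fF: "is_functor C D Fo Fm"
    and fG: "is_functor D C Go Gm"
    and bij: "\<forall>A \<in> Obj C. \<forall>B \<in> Obj D. bij_betw (\<phi> A B) (hom D (Fo A) B) (hom C A (Go B))"
    and natA: "\<forall>A \<in> Obj C. \<forall>A' \<in> Obj C. \<forall>B \<in> Obj D. \<forall>u \<in> hom C A' A. \<forall>f \<in> hom D (Fo A) B.
        \<phi> A' B (cmp D f (Fm u)) = cmp C (\<phi> A B f) u"
    unfolding is_adjunction_def by blast+
  have FA: "Fo A \<in> Obj D" and FB: "Fo B \<in> Obj D" using fF A B unfolding is_functor_def by blast+
  obtain u where u: "u \<in> hom C A B" using AB unfolding arrows_def by blast
  have "Fm u \<in> hom D (Fo A) (Fo B)" using fF A B u unfolding is_functor_def by blast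
  hence "arrows D (Fo A) (Fo B)" unfolding arrows_def by blast
  then obtain X where X: "X \<in> Obj D" and RA: "ramsey_arrow D k (Fo A) (Fo B) X"
    using R k FA FB unfolding ramsey_property_morphisms_def by blast
  have GX: "Go X \<in> Obj C" using fG X unfolding is_functor_def by blast
  have bA: "bij_betw (\<phi> A X) (hom D (Fo A) X) (hom C A (Go X))" using bij A X by blast
  have bB: "bij_betw (\<phi> B X) (hom D (Fo B) X) (hom C B (Go X))" using bij B X by blast
  from RA obtain v where v: "v \<in> hom D (Fo B) X" unfolding ramsey_arrow_def arrows_def by blast
  have "\<phi> B X v \<in> hom C B (Go X)" using bB v by (meson bij_betwE)
  hence arBG: "arrows C B (Go X)" unfolding arrows_def by blast
  show "\<exists>Y\<in>Obj C. ramsey_arrow C k A B Y"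
  proof (intro bexI[OF _ GX])
    show "ramsey_arrow C k A B (Go X)"
      unfolding ramsey_arrow_def
    proof (intro conjI AB arBG allI impI)
      fix M assume col: "is_coloring k (hom C A (Go X)) M"
      define M' where "M' i = {f \<in> hom D (Fo A) X. \<phi> A X f \<in> M i}" for i
      have "is_coloring k (hom D (Fo A) X) M'"
        unfolding is_coloring_def
      proof (intro conjI ballI impI)
        show "(\<Union>i\<in>{1..k}. M' i) = hom D (Fo A) X"
        proof
          show "(\<Union>i\<in>{1..k}. M' i) \<subseteq> hom D (Fo A) X" unfolding M'_def by blast
          show "hom D (Fo A) X \<subseteq> (\<Union>i\<in>{1..k}. M' i)"
          proof
            fix f assume f: "f \<in> hom D (Fo A) X"
            hence "\<phi> A X f \<in> hom C A (Go X)" using bA by (meson bij_betwE)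
            hence "\<phi> A X f \<in> (\<Union>i\<in>{1..k}. M i)" using col unfolding is_coloring_def by blast
            thus "f \<in> (\<Union>i\<in>{1..k}. M' i)" using f unfolding M'_def by blast
          qed
        qed
      next
        fix i j assume "i \<in> {1..k}" "j \<in> {1..k}" "i \<noteq> j"
        hence "M i \<inter> M j = {}" using col unfolding is_coloring_def by blast
        thus "M' i \<inter> M' j = {}" unfolding M'_def by blast
      qed
      then obtain i w where i: "i \<in> {1..k}" and w: "w \<in> hom D (Fo B) X"
        and sub: "(\<lambda>f. cmp D w f) ` hom D (Fo A) (Fo B) \<subseteq> M' i"
        using RA unfolding ramsey_arrow_def by blast
      have w': "\<phi> B X w \<in> hom C B (Go X)" using bB w by (meson bij_betwE)
      have "(\<lambda>f. cmp C (\<phi> B X w) f) ` hom C A B \<subseteq> M i"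
      proof
        fix h assume "h \<in> (\<lambda>f. cmp C (\<phi> B X w) f) ` hom C A B"
        then obtain g where g: "g \<in> hom C A B" and h: "h = cmp C (\<phi> B X w) g" by blast
        have Fg: "Fm g \<in> hom D (Fo A) (Fo B)" using fF A B g unfolding is_functor_def by blast
        have "cmp D w (Fm g) \<in> M' i" using sub Fg by blast
        hence "\<phi> A X (cmp D w (Fm g)) \<in> M i" unfolding M'_def by blast
        moreover have "\<phi> A X (cmp D w (Fm g)) = cmp C (\<phi> B X w) g"
          using natA B A X g w by blast
        ultimately show "h \<in> M i" using h by simp
      qed
      thus "\<exists>i\<in>{1..k}. \<exists>w\<in>hom C B (Go X). (\<lambda>f. cmp C w f) ` hom C A B \<subseteq> M i"
        using i w' by blast
    qed
  qed
qed

lemma partB: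
  assumes adj: "is_adjunction C D Fo Fm Go Gm \<phi>" and R: "ramsey_property_morphisms (opposite C)"
  shows "ramsey_property_morphisms (opposite D)"
  unfolding ramsey_opp
proof (intro allI impI ballI)
  fix k :: nat and A B assume k: "k \<ge> 2" and A: "A \<in> Obj D" and B: "B \<in> Obj D"
    and BA: "hom D B A \<noteq> {}"
  from adj have cC: "is_category C" and cD: "is_category D" and fF: "is_functor C D Fo Fm"
    and fG: "is_functor D C Go Gm"
    and bij: "\<forall>A \<in> Obj C. \<forall>B \<in> Obj D. bij_betw (\<phi> A B) (hom D (Fo A) B) (hom C A (Go B))"
    and natB: "\<forall>A \<in> Obj C. \<forall>B \<in> Obj D. \<forall>B' \<in> Obj D. \<forall>g \<in> hom D B B'. \<forall>f \<in> hom D (Fo A) B.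
        \<phi> A B' (cmp D g f) = cmp C (Gm g) (\<phi> A B f)"
    unfolding is_adjunction_def by blast+
  have GA: "Go A \<in> Obj C" and GB: "Go B \<in> Obj C" using fG A B unfolding is_functor_def by blast+
  obtain u where u: "u \<in> hom D B A" using BA by blast
  have "Gm u \<in> hom C (Go B) (Go A)" using fG A B u unfolding is_functor_def by blast
  hence "hom C (Go B) (Go A) \<noteq> {}" by blast
  then obtain X where X: "X \<in> Obj C" and XB: "hom C X (Go B) \<noteq> {}"
    and RX: "\<forall>M. is_coloring k (hom C X (Go A)) M \<longrightarrow>
         (\<exists>i \<in> {1..k}. \<exists>w \<in> hom C X (Go B). (\<lambda>f. cmp C f w) ` hom C (Go B) (Go A) \<subseteq> M i)"
    using R k GA GB unfolding ramsey_opp by blast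
  have FX: "Fo X \<in> Obj D" using fF X unfolding is_functor_def by blast
  have bA: "bij_betw (\<phi> X A) (hom D (Fo X) A) (hom C X (Go A))" using bij A X by blast
  have bB: "bij_betw (\<phi> X B) (hom D (Fo X) B) (hom C X (Go B))" using bij B X by blast
  have FXB: "hom D (Fo X) B \<noteq> {}" using XB bB unfolding bij_betw_def by blast
  show "\<exists>Y\<in>Obj D. hom D B A \<noteq> {} \<and> hom D Y B \<noteq> {} \<and>
          (\<forall>M. is_coloring k (hom D Y A) M \<longrightarrow>
            (\<exists>i\<in>{1..k}. \<exists>w\<in>hom D Y B. (\<lambda>f. cmp D f w) ` hom D B A \<subseteq> M i))"
  proof (intro bexI[OF _ FX] conjI BA FXB allI impI)
    fix M assume col: "is_coloring k (hom D (Fo X) A) M"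
    have Msub: "\<And>i. i \<in> {1..k} \<Longrightarrow> M i \<subseteq> hom D (Fo X) A"
      using col unfolding is_coloring_def by blast
    have injA: "inj_on (\<phi> X A) (hom D (Fo X) A)" using bA unfolding bij_betw_def by blast
    define M' where "M' i = \<phi> X A ` M i" for i
    have colM': "is_coloring k (hom C X (Go A)) M'"
      unfolding is_coloring_def
    proof (intro conjI ballI impI)
      have "(\<Union>i\<in>{1..k}. M' i) = \<phi> X A ` (\<Union>i\<in>{1..k}. M i)" unfolding M'_def by blast
      also have "\<dots> = \<phi> X A ` hom D (Fo X) A" using col unfolding is_coloring_def by simp
      also have "\<dots> = hom C X (Go A)" using bA unfolding bij_betw_def by blast
      finally show "(\<Union>i\<in>{1..k}. M' i) = hom C X (Go A)" .
    next
      fix i j assume ij: "i \<in> {1..k}" "j \<in> {1..k}" "i \<noteq> j"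
      hence d: "M i \<inter> M j = {}" using col unfolding is_coloring_def by blast
      show "M' i \<inter> M' j = {}"
      proof (rule ccontr)
        assume "M' i \<inter> M' j \<noteq> {}"
        then obtain f1 f2 where f1: "f1 \<in> M i" and f2: "f2 \<in> M j" and e: "\<phi> X A f1 = \<phi> X A f2"
          unfolding M'_def by blast
        have "f1 = f2" using injA e f1 f2 Msub ij unfolding inj_on_def by blast
        thus False using d f1 f2 by blast
      qed
    qed
    have ex: "\<exists>i \<in> {1..k}. \<exists>w \<in> hom C X (Go B). (\<lambda>f. cmp C f w) ` hom C (Go B) (Go A) \<subseteq> M' i"
      using RX colM' by blast
    obtain i w where i: "i \<in> {1..k}" and w: "w \<in> hom C X (Go B)"
      and sub: "(\<lambda>f. cmp C f w) ` hom C (Go B) (Go A) \<subseteq> M' i"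
      using ex by blast
    obtain w' where w': "w' \<in> hom D (Fo X) B" and ww: "\<phi> X B w' = w"
    proof -
      have "w \<in> \<phi> X B ` hom D (Fo X) B" using bB w by (simp add: bij_betw_def)
      then show ?thesis using that by (elim imageE) simp
    qed
    have "(\<lambda>f. cmp D f w') ` hom D B A \<subseteq> M i"
    proof
      fix h assume "h \<in> (\<lambda>f. cmp D f w') ` hom D B A"
      then obtain g where g: "g \<in> hom D B A" and h: "h = cmp D g w'" by blast
      have cmpD: "\<forall>a \<in> Obj D. \<forall>b \<in> Obj D. \<forall>c \<in> Obj D. \<forall>f \<in> hom D a b. \<forall>g \<in> hom D b c.
        cmp D g f \<in> hom D a c" using cD unfolding is_category_def by blast
      have hh: "h \<in> hom D (Fo X) A" unfolding h by (rule cmpD[rule_format, OF FX B A w' g])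
      have Gg: "Gm g \<in> hom C (Go B) (Go A)" using fG A B g unfolding is_functor_def by blast
      have "\<phi> X A h = cmp C (Gm g) w" unfolding h ww[symmetric] by (rule natB[rule_format, OF X B A g w'])
      hence "\<phi> X A h \<in> M' i" using sub Gg by blast
      then obtain f where f: "f \<in> M i" and e: "\<phi> X A f = \<phi> X A h" unfolding M'_def by auto
      have "f = h" by (rule inj_onD[OF injA e]) (use f Msub[OF i] hh in auto)
      thus "h \<in> M i" using f by simp
    qed
    thus "\<exists>i\<in>{1..k}. \<exists>w\<in>hom D (Fo X) B. (\<lambda>f. cmp D f w) ` hom D B A \<subseteq> M i"
      using i w' by blast
  qed
qed

theorem theorem3p1:
  fixes C :: "('oc, 'mc) category" and D :: "('od, 'md) category"
    and Fo :: "'oc \<Rightarrow> 'od" and Fm :: "'mc \<Rightarrow> 'md"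
    and Go :: "'od \<Rightarrow> 'oc" and Gm :: "'md \<Rightarrow> 'mc"
    and \<phi> :: "'oc \<Rightarrow> 'od \<Rightarrow> 'md \<Rightarrow> 'mc"
  assumes "is_adjunction C D Fo Fm Go Gm \<phi>"
  shows "(ramsey_property_morphisms D \<longrightarrow> ramsey_property_morphisms C) \<and>
         (dual_ramsey_property_morphisms C \<longrightarrow> dual_ramsey_property_morphisms D)"
  using partA[OF assms] partB[OF assms] unfolding dual_ramsey_property_morphisms_def by blast

end
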